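(* Let $R$ be a (unital, not necessarily associative) ring, let $\sigma\colon R\to R$ be an additive surjection with $\sigma(1)=1$, and let $\delta\colon R\to R$ be an additive map with $\delta(1)=0$. If $R$ is right Noetherian, then the non-associative Ore extension $R[X;\sigma,\delta]$ is right Noetherian.
   Context: A right ideal of a non-associative ring $S$ is an additive subgroup $I$ with $Is\subseteq I$ for all $s\in S$; $S$ is right Noetherian if it satisfies the ascending chain condition on right ideals. For a non-associative ring $R$ and additive maps $\sigma,\delta\colon R\to R$ with $\sigma(1)=1$, $\delta(1)=0$, the non-associative Ore extension $R[X;\sigma,\delta]$ is the additive group of formal sums $\sum_{i\in\mathbb{N}} r_iX^i$ ($r_i\in R$, finitely many non-zero) with pointwise addition and multiplication the biadditive extension of $(rX^m)(sX^n)=\sum_{i\in\mathbb{N}}(r\pi_i^m(s))X^{i+n}$ for $r,s\in R$, $m,n\in\mathbb{N}$, where $\pi_i^m$ is the sum of all $\binom{m}{i}$ compositions of $i$ copies of $\sigma$ and $m-i$ copies of $\delta$, and $\pi_i^m=0$ if $i>m$. *)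

theory Defs
  imports "HOL-Computational_Algebra.Polynomial"
begin

definition nonassoc_ring_1 :: "('a::ab_group_add \<Rightarrow> 'a \<Rightarrow> 'a) \<Rightarrow> 'a \<Rightarrow> bool" where
  "nonassoc_ring_1 mul one \<longleftrightarrow>
     (\<forall>a b c. mul (a + b) c = mul a c + mul b c) \<and>
     (\<forall>a b c. mul a (b + c) = mul a b + mul a c) \<and>
     (\<forall>a. mul one a = a) \<and> (\<forall>a. mul a one = a)"

definition additive_map :: "('a::ab_group_add \<Rightarrow> 'b::ab_group_add) \<Rightarrow> bool" where
  "additive_map f \<longleftrightarrow> (\<forall>x y. f (x + y) = f x + f y)"

definition right_ideal :: "('a::ab_group_add \<Rightarrow> 'a \<Rightarrow> 'a) \<Rightarrow> 'a set \<Rightarrow> bool" where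
  "right_ideal mul I \<longleftrightarrow>
     0 \<in> I \<and> (\<forall>x\<in>I. \<forall>y\<in>I. x - y \<in> I) \<and> (\<forall>x\<in>I. \<forall>s. mul x s \<in> I)"

definition right_noetherian :: "('a::ab_group_add \<Rightarrow> 'a \<Rightarrow> 'a) \<Rightarrow> bool" where
  "right_noetherian mul \<longleftrightarrow>
     (\<forall>I :: nat \<Rightarrow> 'a set. (\<forall>n. right_ideal mul (I n)) \<and> (\<forall>n. I n \<subseteq> I (Suc n))
        \<longrightarrow> (\<exists>N. \<forall>n\<ge>N. I n = I N))"

text \<open>The composition determined by a word of length m in sigma and delta, the word
  being encoded by the set S of positions (< m) carrying sigma; position k is applied
  after positions < k.\<close>
fun word_comp :: "('a \<Rightarrow> 'a) \<Rightarrow> ('a \<Rightarrow> 'a) \<Rightarrow> nat set \<Rightarrow> nat \<Rightarrow> 'a \<Rightarrow> 'a" where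
  "word_comp \<sigma> \<delta> S 0 = id"
| "word_comp \<sigma> \<delta> S (Suc k) = (if k \<in> S then \<sigma> else \<delta>) \<circ> word_comp \<sigma> \<delta> S k"

text \<open>pi_i^m: sum of all (m choose i) compositions of i copies of sigma and m-i copies
  of delta (zero if i > m, as the index set is then empty).\<close>
definition ore_pi :: "('a::ab_group_add \<Rightarrow> 'a) \<Rightarrow> ('a \<Rightarrow> 'a) \<Rightarrow> nat \<Rightarrow> nat \<Rightarrow> 'a \<Rightarrow> 'a" where
  "ore_pi \<sigma> \<delta> i m x = (\<Sum>S\<in>{S. S \<subseteq> {..<m} \<and> card S = i}. word_comp \<sigma> \<delta> S m x)"

text \<open>Multiplication of R[X;sigma,delta] on 'a poly (formal sums sum r_i X^i):
  biadditive extension of (r X^m)(s X^n) = sum_i (r pi_i^m(s)) X^(i+n).\<close>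
definition ore_mul :: "('a::ab_group_add \<Rightarrow> 'a \<Rightarrow> 'a) \<Rightarrow> ('a \<Rightarrow> 'a) \<Rightarrow> ('a \<Rightarrow> 'a)
    \<Rightarrow> 'a poly \<Rightarrow> 'a poly \<Rightarrow> 'a poly" where
  "ore_mul mul \<sigma> \<delta> p q =
     (\<Sum>m\<le>degree p. \<Sum>n\<le>degree q. \<Sum>i\<le>m.
        monom (mul (coeff p m) (ore_pi \<sigma> \<delta> i m (coeff q n))) (i + n))"

end

theory Submission
  imports Defs
begin

lemma wc_zero:
  assumes "\<sigma> 0 = 0" "\<delta> 0 = 0"
  shows "word_comp \<sigma> \<delta> S m 0 = 0"
  by (induction m) (auto simp: assms)

lemma wc_sigma:
  "{..<k} \<subseteq> S \<Longrightarrow> word_comp \<sigma> \<delta> S k = \<sigma> ^^ k"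
proof (induction k)
  case (Suc k)
  then have "{..<k} \<subseteq> S" "k \<in> S" by auto
  with Suc show ?case by simp
qed simp

lemma pi_zero:
  assumes "\<sigma> 0 = 0" "\<delta> 0 = 0"
  shows "ore_pi \<sigma> \<delta> i m (0::'a::ab_group_add) = 0"
  unfolding ore_pi_def using wc_zero[of \<sigma> \<delta>, OF assms] by simp

lemma pi_top:
  "ore_pi \<sigma> \<delta> N N (x::'a::ab_group_add) = (\<sigma> ^^ N) x"
proof -
  have "{S. S \<subseteq> {..<N} \<and> card S = N} = {{..<N}}"
  proof (intro equalityI subsetI)
    fix S assume "S \<in> {S. S \<subseteq> {..<N} \<and> card S = N}"
    then have "S \<subseteq> {..<N}" "card S = card {..<N}" by auto
    then show "S \<in> {{..<N}}" using card_subset_eq[of "{..<N}" S] by auto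
  qed auto
  then show ?thesis unfolding ore_pi_def using wc_sigma[of N "{..<N}" \<sigma> \<delta>] by simp
qed

lemma ore_mul_coeff:
  fixes mul :: "'a::ab_group_add \<Rightarrow> 'a \<Rightarrow> 'a"
  assumes m0: "\<And>x. mul 0 x = 0" and m0': "\<And>x. mul x 0 = 0"
    and p0: "\<And>i m. ore_pi \<sigma> \<delta> i m 0 = 0"
    and dp: "degree p \<le> A" and dq: "degree q \<le> B"
  shows "coeff (ore_mul mul \<sigma> \<delta> p q) k =
    (\<Sum>m\<le>A. \<Sum>n\<le>B. \<Sum>i\<le>m. if i + n = k then mul (coeff p m) (ore_pi \<sigma> \<delta> i m (coeff q n)) else 0)"
proof -
  have "coeff (ore_mul mul \<sigma> \<delta> p q) k =
    (\<Sum>m\<le>degree p. \<Sum>n\<le>degree q. \<Sum>i\<le>m. if i + n = k then mul (coeff p m) (ore_pi \<sigma> \<delta> i m (coeff q n)) else 0)"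
    unfolding ore_mul_def by (simp add: coeff_sum coeff_monom)
  also have "\<dots> = (\<Sum>m\<le>degree p. \<Sum>n\<le>B. \<Sum>i\<le>m. if i + n = k then mul (coeff p m) (ore_pi \<sigma> \<delta> i m (coeff q n)) else 0)"
  proof (rule sum.cong[OF refl], rule sum.mono_neutral_left)
    fix x
    show "\<forall>i\<in>{..B} - {..degree q}. (\<Sum>ia\<le>x. if ia + i = k then mul (coeff p x) (ore_pi \<sigma> \<delta> ia x (coeff q i)) else 0) = 0"
    proof
      fix i assume "i \<in> {..B} - {..degree q}"
      then have "coeff q i = 0" by (simp add: coeff_eq_0)
      then show "(\<Sum>ia\<le>x. if ia + i = k then mul (coeff p x) (ore_pi \<sigma> \<delta> ia x (coeff q i)) else 0) = 0"
        by (simp only: p0 m0') simp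
    qed
  qed (use dq in auto)
  also have "\<dots> = (\<Sum>m\<le>A. \<Sum>n\<le>B. \<Sum>i\<le>m. if i + n = k then mul (coeff p m) (ore_pi \<sigma> \<delta> i m (coeff q n)) else 0)"
  proof (rule sum.mono_neutral_left)
    show "\<forall>x\<in>{..A} - {..degree p}. (\<Sum>n\<le>B. \<Sum>i\<le>x. if i + n = k then mul (coeff p x) (ore_pi \<sigma> \<delta> i x (coeff q n)) else 0) = 0"
    proof
      fix x assume "x \<in> {..A} - {..degree p}"
      then have "coeff p x = 0" by (simp add: coeff_eq_0)
      then show "(\<Sum>n\<le>B. \<Sum>i\<le>x. if i + n = k then mul (coeff p x) (ore_pi \<sigma> \<delta> i x (coeff q n)) else 0) = 0"
        by (simp only: m0) simp
    qed
  qed (use dp in auto)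
  finally show ?thesis .
qed

lemma delta_atMost:
  "(\<Sum>i\<le>(m::nat). if i = N then F i else (0::'a::comm_monoid_add)) = (if N \<le> m then F N else 0)"
  by (subst sum.delta) simp_all

lemma tri_sum:
  "(\<Sum>m\<le>(N::nat). \<Sum>i\<le>m. if i = N then F m i else (0::'a::comm_monoid_add)) = F N N"
proof -
  have "(\<Sum>m\<le>N. \<Sum>i\<le>m. if i = N then F m i else (0::'a)) = (\<Sum>m\<le>N. if m = N then F N N else 0)"
  proof (rule sum.cong[OF refl])
    fix m assume "m \<in> {..N}"
    then show "(\<Sum>i\<le>m. if i = N then F m i else 0) = (if m = N then F N N else 0)"
      using delta_atMost[where m=m and N=N and F="F m"] by auto
  qed
  then show ?thesis using delta_atMost[where m=N and N=N and F="\<lambda>_. F N N"] by simp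
qed

lemma ore_mul_degree:
  fixes mul :: "'a::ab_group_add \<Rightarrow> 'a \<Rightarrow> 'a"
  assumes m0: "\<And>x. mul 0 x = 0" and m0': "\<And>x. mul x 0 = 0"
    and p0: "\<And>i m. ore_pi \<sigma> \<delta> i m 0 = 0"
    and dp: "degree p \<le> A" and dq: "degree q \<le> B"
  shows "degree (ore_mul mul \<sigma> \<delta> p q) \<le> A + B"
proof (rule degree_le, intro allI impI)
  fix k assume k: "A + B < k"
  show "coeff (ore_mul mul \<sigma> \<delta> p q) k = 0"
    unfolding ore_mul_coeff[where mul=mul and \<sigma>=\<sigma> and \<delta>=\<delta>, OF m0 m0' p0 dp dq]
    by (rule sum.neutral, intro ballI, rule sum.neutral, intro ballI, rule sum.neutral) (use k in auto)
qed

lemma ore_mul_const: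
  fixes mul :: "'a::ab_group_add \<Rightarrow> 'a \<Rightarrow> 'a"
  assumes m0: "\<And>x. mul 0 x = 0" and m0': "\<And>x. mul x 0 = 0"
    and p0: "\<And>i m. ore_pi \<sigma> \<delta> i m 0 = 0"
    and dp: "degree p \<le> N"
  shows "degree (ore_mul mul \<sigma> \<delta> p [:s:]) \<le> N"
    "coeff (ore_mul mul \<sigma> \<delta> p [:s:]) N = mul (coeff p N) ((\<sigma> ^^ N) s)"
proof -
  have dq: "degree [:s:] \<le> 0" by simp
  show "degree (ore_mul mul \<sigma> \<delta> p [:s:]) \<le> N"
    using ore_mul_degree[where mul=mul and \<sigma>=\<sigma> and \<delta>=\<delta>, OF m0 m0' p0 dp dq] by simp
  have "coeff (ore_mul mul \<sigma> \<delta> p [:s:]) N =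
    (\<Sum>m\<le>N. \<Sum>i\<le>m. if i = N then mul (coeff p m) (ore_pi \<sigma> \<delta> i m s) else 0)"
    unfolding ore_mul_coeff[where mul=mul and \<sigma>=\<sigma> and \<delta>=\<delta>, OF m0 m0' p0 dp dq]
    by (rule sum.cong[OF refl]) simp
  also have "\<dots> = mul (coeff p N) ((\<sigma> ^^ N) s)"
    by (subst tri_sum) (simp add: pi_top)
  finally show "coeff (ore_mul mul \<sigma> \<delta> p [:s:]) N = mul (coeff p N) ((\<sigma> ^^ N) s)" .
qed

lemma ore_mul_X:
  fixes mul :: "'a::ab_group_add \<Rightarrow> 'a \<Rightarrow> 'a"
  assumes m0: "\<And>x. mul 0 x = 0" and m0': "\<And>x. mul x 0 = 0"
    and p0: "\<And>i m. ore_pi \<sigma> \<delta> i m 0 = 0"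
    and dp: "degree p \<le> N"
  shows "degree (ore_mul mul \<sigma> \<delta> p (monom c 1)) \<le> Suc N"
    "coeff (ore_mul mul \<sigma> \<delta> p (monom c 1)) (Suc N) = mul (coeff p N) ((\<sigma> ^^ N) c)"
proof -
  have dq: "degree (monom c 1) \<le> 1" by (simp add: degree_monom_le)
  show "degree (ore_mul mul \<sigma> \<delta> p (monom c 1)) \<le> Suc N"
    using ore_mul_degree[where mul=mul and \<sigma>=\<sigma> and \<delta>=\<delta>, OF m0 m0' p0 dp dq] by simp
  have "coeff (ore_mul mul \<sigma> \<delta> p (monom c 1)) (Suc N) =
    (\<Sum>m\<le>N. \<Sum>i\<le>m. if i = N then mul (coeff p m) (ore_pi \<sigma> \<delta> i m c) else 0)"
    unfolding ore_mul_coeff[where mul=mul and \<sigma>=\<sigma> and \<delta>=\<delta>, OF m0 m0' p0 dp dq]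
  proof (rule sum.cong[OF refl])
    fix m assume m: "m \<in> {..N}"
    have "{..1::nat} = {0, 1}" by auto
    then show "(\<Sum>n\<le>1. \<Sum>i\<le>m. if i + n = Suc N then mul (coeff p m) (ore_pi \<sigma> \<delta> i m (coeff (monom c 1) n)) else 0) =
       (\<Sum>i\<le>m. if i = N then mul (coeff p m) (ore_pi \<sigma> \<delta> i m c) else 0)"
      using m by (simp add: coeff_monom)
  qed
  also have "\<dots> = mul (coeff p N) ((\<sigma> ^^ N) c)"
    by (subst tri_sum) (simp add: pi_top)
  finally show "coeff (ore_mul mul \<sigma> \<delta> p (monom c 1)) (Suc N) = mul (coeff p N) ((\<sigma> ^^ N) c)" .
qed

definition Jset :: "nat \<Rightarrow> 'a::zero poly set \<Rightarrow> 'a set" where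
  "Jset n I = {coeff f n | f. f \<in> I \<and> degree f \<le> n}"

lemma ideal_add:
  assumes "right_ideal T A" "x \<in> A" "y \<in> A"
  shows "x + y \<in> A"
proof -
  have "0 - y \<in> A" using assms unfolding right_ideal_def by blast
  then have "x - (0 - y) \<in> A" using assms unfolding right_ideal_def by blast
  then show ?thesis by simp
qed

lemma ideal_eq:
  fixes T :: "'a::ab_group_add poly \<Rightarrow> 'a poly \<Rightarrow> 'a poly"
  assumes A: "right_ideal T A" and B: "right_ideal T B" and AB: "A \<subseteq> B"
    and J: "\<And>n. Jset n B \<subseteq> Jset n A"
  shows "B \<subseteq> A"
proof -
  have "\<forall>f\<in>B. degree f < n \<longrightarrow> f \<in> A" for n
  proof (induction n)
    case 0 then show ?case by simp
  next
    case (Suc n)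
    show ?case
    proof (intro ballI impI)
      fix f assume f: "f \<in> B" "degree f < Suc n"
      then have "coeff f n \<in> Jset n B" unfolding Jset_def by auto
      then have "coeff f n \<in> Jset n A" using J by blast
      then obtain g where g: "g \<in> A" "degree g \<le> n" "coeff g n = coeff f n"
        unfolding Jset_def by auto
      have hB: "f - g \<in> B" using B f g AB unfolding right_ideal_def by blast
      have "f - g \<in> A"
      proof (cases "f - g = 0")
        case True then show ?thesis using A unfolding right_ideal_def by simp
      next
        case False
        have d: "degree (f - g) \<le> n" using f g degree_diff_le[of f n g] by simp
        have "coeff (f - g) n = 0" using g by simp
        then have "degree (f - g) \<noteq> n" using False leading_coeff_neq_0 by metis
        with d have "degree (f - g) < n" by simp
        then show ?thesis using Suc.IH hB by blast
      qed
      then have "(f - g) + g \<in> A" using ideal_add[OF A] g by blast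
      then show "f \<in> A" by simp
    qed
  qed
  then show ?thesis by blast
qed

lemma J_ideal:
  fixes mul :: "'a::ab_group_add \<Rightarrow> 'a \<Rightarrow> 'a"
  assumes m0: "\<And>x. mul 0 x = 0" and m0': "\<And>x. mul x 0 = 0"
    and p0: "\<And>i m. ore_pi \<sigma> \<delta> i m 0 = 0"
    and su: "surj \<sigma>"
    and I: "right_ideal (ore_mul mul \<sigma> \<delta>) I"
  shows "right_ideal mul (Jset n I)"
  unfolding right_ideal_def
proof (intro conjI ballI allI)
  show "0 \<in> Jset n I" unfolding Jset_def
    using I unfolding right_ideal_def by (auto intro!: exI[of _ 0])
next
  fix x y assume "x \<in> Jset n I" "y \<in> Jset n I"
  then obtain f g where "f \<in> I" "degree f \<le> n" "x = coeff f n"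
    "g \<in> I" "degree g \<le> n" "y = coeff g n" unfolding Jset_def by auto
  moreover have "f - g \<in> I" using I calculation unfolding right_ideal_def by blast
  moreover have "degree (f - g) \<le> n" using calculation degree_diff_le by blast
  ultimately show "x - y \<in> Jset n I" unfolding Jset_def by (auto intro!: exI[of _ "f - g"])
next
  fix x s assume "x \<in> Jset n I"
  then obtain f where f: "f \<in> I" "degree f \<le> n" "x = coeff f n" unfolding Jset_def by auto
  have "surj (\<sigma> ^^ n)" using su by simp
  then obtain t where t: "s = (\<sigma> ^^ n) t" by (metis surjD)
  have "ore_mul mul \<sigma> \<delta> f [:t:] \<in> I" using I f unfolding right_ideal_def by blast
  moreover note ore_mul_const[where mul=mul and \<sigma>=\<sigma> and \<delta>=\<delta>, OF m0 m0' p0 f(2), of t]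
  ultimately show "mul x s \<in> Jset n I" unfolding Jset_def using f t
    by (auto intro!: exI[of _ "ore_mul mul \<sigma> \<delta> f [:t:]"])
qed

lemma J_Suc:
  fixes mul :: "'a::ab_group_add \<Rightarrow> 'a \<Rightarrow> 'a"
  assumes m0: "\<And>x. mul 0 x = 0" and m0': "\<And>x. mul x 0 = 0"
    and p0: "\<And>i m. ore_pi \<sigma> \<delta> i m 0 = 0"
    and one: "\<And>x. mul x one = x" and s1: "\<sigma> one = one"
    and I: "right_ideal (ore_mul mul \<sigma> \<delta>) I"
  shows "Jset n I \<subseteq> Jset (Suc n) I"
proof
  fix x assume "x \<in> Jset n I"
  then obtain f where f: "f \<in> I" "degree f \<le> n" "x = coeff f n" unfolding Jset_def by auto
  have pw: "(\<sigma> ^^ k) one = one" for k by (induction k) (simp_all add: s1)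
  have "ore_mul mul \<sigma> \<delta> f (monom one 1) \<in> I" using I f unfolding right_ideal_def by blast
  moreover note ore_mul_X[where mul=mul and \<sigma>=\<sigma> and \<delta>=\<delta>, OF m0 m0' p0 f(2), of one]
  ultimately show "x \<in> Jset (Suc n) I" unfolding Jset_def using f pw one
    by (auto intro!: exI[of _ "ore_mul mul \<sigma> \<delta> f (monom one 1)"])
qed

theorem theorem13:
  fixes mul :: "'a::ab_group_add \<Rightarrow> 'a \<Rightarrow> 'a" and one :: 'a
    and \<sigma> \<delta> :: "'a \<Rightarrow> 'a"
  assumes "nonassoc_ring_1 mul one"
    and "additive_map \<sigma>" and "surj \<sigma>" and "\<sigma> one = one"
    and "additive_map \<delta>" and "\<delta> one = 0"
    and "right_noetherian mul"
  shows "right_noetherian (ore_mul mul \<sigma> \<delta>)"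
proof -
  have m0: "\<And>x. mul 0 x = 0"
  proof -
    fix x have "mul (0 + 0) x = mul 0 x + mul 0 x" using assms(1) unfolding nonassoc_ring_1_def by blast
    then show "mul 0 x = 0" by simp
  qed
  have m0': "\<And>x. mul x 0 = 0"
  proof -
    fix x have "mul x (0 + 0) = mul x 0 + mul x 0" using assms(1) unfolding nonassoc_ring_1_def by blast
    then show "mul x 0 = 0" by simp
  qed
  have one: "\<And>x. mul x one = x" using assms(1) unfolding nonassoc_ring_1_def by blast
  have s0: "\<sigma> 0 = 0"
  proof -
    have "\<sigma> (0 + 0) = \<sigma> 0 + \<sigma> 0" using assms(2) unfolding additive_map_def by blast
    then show ?thesis by simp
  qed
  have d0: "\<delta> 0 = 0"
  proof -
    have "\<delta> (0 + 0) = \<delta> 0 + \<delta> 0" using assms(5) unfolding additive_map_def by blast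
    then show ?thesis by simp
  qed
  have p0: "\<And>i m. ore_pi \<sigma> \<delta> i m 0 = 0" using pi_zero[of \<sigma> \<delta>, OF s0 d0] by blast
  have noeth: "\<And>C :: nat \<Rightarrow> 'a set. (\<And>n. right_ideal mul (C n)) \<Longrightarrow> (\<And>n. C n \<subseteq> C (Suc n))
        \<Longrightarrow> \<exists>N. \<forall>n\<ge>N. C n = C N"
    using assms(7) unfolding right_noetherian_def by blast
  show ?thesis unfolding right_noetherian_def
  proof (intro allI impI, elim conjE)
    fix I :: "nat \<Rightarrow> 'a poly set"
    assume Iid: "\<forall>n. right_ideal (ore_mul mul \<sigma> \<delta>) (I n)" and Imono: "\<forall>n. I n \<subseteq> I (Suc n)"
    define L where "L n k = Jset n (I k)" for n k
    have Lid: "right_ideal mul (L n k)" for n k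
      unfolding L_def using J_ideal[where mul=mul and \<sigma>=\<sigma> and \<delta>=\<delta>, OF m0 m0' p0 assms(3)] Iid by blast
    have Ik: "I k \<subseteq> I k'" if "k \<le> k'" for k k'
      using lift_Suc_mono_le[of I, OF _ that] Imono by blast
    have Lk: "L n k \<subseteq> L n k'" if "k \<le> k'" for n k k'
      unfolding L_def Jset_def using Ik[OF that] by blast
    have LSuc: "L n k \<subseteq> L (Suc n) k" for n k
      unfolding L_def using J_Suc[where mul=mul and \<sigma>=\<sigma> and \<delta>=\<delta>, OF m0 m0' p0 one assms(4)] Iid by blast
    have Ln: "L n k \<subseteq> L n' k" if "n \<le> n'" for n n' k
      using lift_Suc_mono_le[of "\<lambda>n. L n k", OF _ that] LSuc by blast
    have Lmono: "L n k \<subseteq> L n' k'" if "n \<le> n'" "k \<le> k'" for n n' k k'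
      using Ln[OF that(1)] Lk[OF that(2)] by blast
    have "L n n \<subseteq> L (Suc n) (Suc n)" for n by (rule Lmono) auto
    then obtain N where N: "\<forall>n\<ge>N. L n n = L N N"
      using noeth[of "\<lambda>n. L n n"] Lid by blast
    have "\<exists>K. \<forall>k\<ge>K. L n k = L n K" for n
    proof -
      have "L n k \<subseteq> L n (Suc k)" for k by (rule Lk) auto
      then show ?thesis using noeth[of "\<lambda>k. L n k"] Lid by blast
    qed
    then obtain K where K: "\<And>n k. k \<ge> K n \<Longrightarrow> L n k = L n (K n)" by metis
    define M where "M = N + (\<Sum>n\<le>N. K n)"
    have KM: "K n \<le> M" if "n \<le> N" for n
    proof -
      have "K n \<le> (\<Sum>n\<le>N. K n)" using that by (intro member_le_sum) auto
      then show ?thesis unfolding M_def by simp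
    qed
    have NM: "N \<le> M" unfolding M_def by simp
    have "I k = I M" if k: "k \<ge> M" for k
    proof
      show "I M \<subseteq> I k" using Ik[OF k] .
      have "L n k \<subseteq> L n M" for n
      proof (cases "n \<le> N")
        case True
        have "K n \<le> k" "K n \<le> M" using KM[OF True] k by linarith+
        then show ?thesis using K[of n k] K[of n M] by simp
      next
        case False
        define j where "j = max n k"
        have jn: "n \<le> j" and jk: "k \<le> j" unfolding j_def by simp_all
        have jN: "N \<le> j" using False jn by linarith
        have "L n k \<subseteq> L j j" by (rule Lmono[OF jn jk])
        also have "\<dots> = L N N" using N jN by blast
        also have "\<dots> \<subseteq> L n M" using False NM by (intro Lmono) simp_all
        finally show ?thesis .
      qed
      then show "I k \<subseteq> I M"
        using ideal_eq[OF Iid[rule_format, of M] Iid[rule_format, of k] Ik[OF k]]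
        unfolding L_def by blast
    qed
    then show "\<exists>N. \<forall>n\<ge>N. I n = I N" by blast
  qed
qed

end
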